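(* Let $\Gamma\colon\mathbb{R}^d\to\mathbb{R}$ be differentiable with uniformly Lipschitz gradient, let $\varepsilon>0$, and define $\mathcal Y^{\mathrm n}(\theta,\xi)=\frac{1}{\epsilon(\theta)}\Gamma(\theta+\epsilon(\theta)\xi)$ for $\theta\in\mathbb{R}^d$, $\xi\in\mathbb{R}^m$ (here $m=d$). Suppose either (i) $\epsilon(\theta)=\varepsilon\sqrt{1+\|\theta-\theta^{\mathrm{ctr}}\|^2/\sigma_p^2}$ for fixed $\theta^{\mathrm{ctr}}\in\mathbb{R}^d$, $\sigma_p>0$; or (ii) $\epsilon(\theta)=\varepsilon\sqrt{1+\Gamma(\theta)-\Gamma^-}$, where $\Gamma^-$ is a constant with $\Gamma(\theta)\ge\Gamma^-$ for all $\theta$, and there is $\delta>0$ such that $\|\nabla\Gamma(\theta)\|\ge\delta\|\theta\|$ whenever $\|\theta\|\ge\delta^{-1}$. Then for every bounded set $S\subset\mathbb{R}^m$ there is $L<\infty$ such that $|\mathcal Y^{\mathrm n}(\theta',\xi)-\mathcal Y^{\mathrm n}(\theta,\xi)|\le L\|\theta'-\theta\|$ for all $\theta,\theta'\in\mathbb{R}^d$ and all $\xi\in S$.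
   Context: The function $\mathcal Y^{\mathrm n}$ is the normalized observation used in quasi-stochastic gradient descent / extremum seeking control with state-dependent probing gain $\epsilon(\theta)$; the probing signal $\xi$ takes values in a bounded set. *)

theory Defs
  imports "HOL-Analysis.Analysis"
begin

definition Yn :: "('a::euclidean_space \<Rightarrow> real) \<Rightarrow> ('a \<Rightarrow> real) \<Rightarrow> 'a \<Rightarrow> 'a \<Rightarrow> real" where
  "Yn eps \<Gamma> \<theta> \<xi> = \<Gamma> (\<theta> + eps \<theta> *\<^sub>R \<xi>) / eps \<theta>"

end

theory Submission imports Defs begin

lemma mvt01:
  fixes g g' :: "real \<Rightarrow> real"
  assumes "\<And>t. 0 \<le> t \<Longrightarrow> t \<le> 1 \<Longrightarrow> (g has_real_derivative g' t) (at t)"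
    and "\<And>t. 0 \<le> t \<Longrightarrow> t \<le> 1 \<Longrightarrow> \<bar>g' t\<bar> \<le> M"
  shows "\<bar>g 1 - g 0\<bar> \<le> M"
proof -
  obtain z where z: "0 < z" "z < 1" "g 1 - g 0 = (1 - 0) * g' z"
    using MVT2[of 0 1 g g'] assms(1) by auto
  then show ?thesis using assms(2)[of z] by simp
qed

locale smoothfn =
  fixes \<Gamma> :: "'a::euclidean_space \<Rightarrow> real" and grad :: "'a \<Rightarrow> 'a" and K :: real
  assumes deriv: "\<And>\<theta>. (\<Gamma> has_derivative (\<lambda>h. grad \<theta> \<bullet> h)) (at \<theta>)"
    and lipK: "\<And>x y. norm (grad x - grad y) \<le> K * norm (x - y)"
    and Kpos: "K > 0"
begin

lemma comp_deriv:
  assumes "(q has_derivative (\<lambda>h. h *\<^sub>R w)) (at t)"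
  shows "((\<lambda>t. \<Gamma> (q t)) has_real_derivative (grad (q t) \<bullet> w)) (at t)"
proof -
  have "((\<lambda>t. \<Gamma> (q t)) has_derivative (\<lambda>h. grad (q t) \<bullet> (h *\<^sub>R w))) (at t)"
    using has_derivative_compose[OF assms deriv] .
  then show ?thesis
    by (rule has_derivative_imp_has_field_derivative) simp
qed

lemma path_deriv: "((\<lambda>t. \<Gamma> (x + t *\<^sub>R v)) has_real_derivative (grad (x + t *\<^sub>R v) \<bullet> v)) (at t)"
  by (rule comp_deriv) (auto intro!: derivative_eq_intros)

lemma taylor: "\<bar>\<Gamma> y - \<Gamma> x - grad x \<bullet> (y - x)\<bar> \<le> K * (norm (y - x))\<^sup>2"
proof -
  define v where "v = y - x"
  define \<phi> where "\<phi> t = \<Gamma> (x + t *\<^sub>R v) - t * (grad x \<bullet> v)" for t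
  have d: "(\<phi> has_real_derivative (grad (x + t *\<^sub>R v) \<bullet> v - grad x \<bullet> v)) (at t)" for t
    unfolding \<phi>_def by (rule derivative_eq_intros path_deriv)+ auto
  have b: "\<bar>grad (x + t *\<^sub>R v) \<bullet> v - grad x \<bullet> v\<bar> \<le> K * (norm v)\<^sup>2" if "0 \<le> t" "t \<le> 1" for t
  proof -
    have "\<bar>grad (x + t *\<^sub>R v) \<bullet> v - grad x \<bullet> v\<bar> = \<bar>(grad (x + t *\<^sub>R v) - grad x) \<bullet> v\<bar>"
      by (simp add: inner_diff_left)
    also have "\<dots> \<le> norm (grad (x + t *\<^sub>R v) - grad x) * norm v"
      by (rule Cauchy_Schwarz_ineq2)
    also have "\<dots> \<le> (K * norm (t *\<^sub>R v)) * norm v"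
      using lipK[of "x + t *\<^sub>R v" x] by (intro mult_right_mono) auto
    also have "\<dots> \<le> K * (norm v)\<^sup>2"
      using that Kpos by (simp add: power2_eq_square mult_le_cancel_right1 mult_left_le_one_le)
    finally show ?thesis .
  qed
  have "\<bar>\<phi> 1 - \<phi> 0\<bar> \<le> K * (norm v)\<^sup>2"
    by (rule mvt01[OF d b])
  then show ?thesis unfolding \<phi>_def v_def by simp
qed

lemma descent:
  assumes "\<And>\<theta>. \<Gamma> \<theta> \<ge> \<Gamma>m"
  shows "(norm (grad x))\<^sup>2 \<le> 4 * K * (\<Gamma> x - \<Gamma>m)"
proof -
  define g where "g = grad x"
  define y where "y = x - (1 / (2 * K)) *\<^sub>R g"
  have "\<Gamma> y - \<Gamma> x - g \<bullet> (y - x) \<le> K * (norm (y - x))\<^sup>2"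
    using taylor[of y x] unfolding g_def by linarith
  moreover have "g \<bullet> (y - x) = - ((norm g)\<^sup>2 / (2 * K))"
    unfolding y_def by (simp add: power2_norm_eq_inner)
  moreover have "K * (norm (y - x))\<^sup>2 = K * ((norm g)\<^sup>2 / (4 * K\<^sup>2))"
    unfolding y_def using Kpos by (simp add: power_divide power_mult_distrib)
  ultimately have "\<Gamma> y \<le> \<Gamma> x - (norm g)\<^sup>2 / (2 * K) + K * ((norm g)\<^sup>2 / (4 * K\<^sup>2))"
    by linarith
  also have "K * ((norm g)\<^sup>2 / (4 * K\<^sup>2)) = (norm g)\<^sup>2 / (4 * K)"
    using Kpos by (simp add: power2_eq_square)
  finally have "\<Gamma>m \<le> \<Gamma> x - (norm g)\<^sup>2 / (4 * K)"
    using assms[of y] by simp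
  then show ?thesis using Kpos unfolding g_def by (simp add: field_simps)
qed

lemma generic:
  fixes e :: "'a \<Rightarrow> real" and de :: "'a \<Rightarrow> 'a"
  assumes e0: "e0 > 0" and ege: "\<And>\<theta>. e \<theta> \<ge> e0"
    and ed: "\<And>\<theta>. (e has_derivative (\<lambda>h. de \<theta> \<bullet> h)) (at \<theta>)"
    and D: "\<And>\<theta>. norm (de \<theta>) \<le> D"
    and A: "\<And>\<theta>. norm (grad \<theta>) \<le> A * e \<theta>"
    and B: "\<And>\<theta>. \<bar>\<Gamma> \<theta> - c\<bar> \<le> B * (e \<theta>)\<^sup>2"
    and xi: "norm \<xi> \<le> R"
  shows "\<bar>Yn e \<Gamma> \<theta>' \<xi> - Yn e \<Gamma> \<theta> \<xi>\<bar> \<le>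
    ((A + K * R) * (1 + D * R) + (\<bar>c\<bar> / e0\<^sup>2 + B + A * R + K * R\<^sup>2) * D) * norm (\<theta>' - \<theta>)"
proof -
  define v where "v = \<theta>' - \<theta>"
  define p where "p t = \<theta> + t *\<^sub>R v" for t :: real
  define E where "E t = e (p t)" for t
  define dE where "dE t = de (p t) \<bullet> v" for t
  define q where "q t = p t + E t *\<^sub>R \<xi>" for t
  define G1 where "G1 t = grad (q t) \<bullet> (v + dE t *\<^sub>R \<xi>)" for t
  define g where "g t = \<Gamma> (q t) / E t" for t
  define g' where "g' t = (G1 t * E t - \<Gamma> (q t) * dE t) / (E t * E t)" for t
  have Epos: "E t > 0" for t using ege[of "p t"] e0 unfolding E_def by linarith
  have pd: "(p has_derivative (\<lambda>h. h *\<^sub>R v)) (at t)" for t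
    unfolding p_def by (auto intro!: derivative_eq_intros)
  have Ed: "(E has_real_derivative dE t) (at t)" for t
  proof -
    have "(E has_derivative (\<lambda>h. de (p t) \<bullet> (h *\<^sub>R v))) (at t)"
      unfolding E_def using has_derivative_compose[OF pd ed] .
    then show ?thesis unfolding dE_def
      by (rule has_derivative_imp_has_field_derivative) simp
  qed
  have qd: "(q has_derivative (\<lambda>h. h *\<^sub>R (v + dE t *\<^sub>R \<xi>))) (at t)" for t
  proof -
    have "((\<lambda>t. p t + E t *\<^sub>R \<xi>) has_derivative (\<lambda>h. h *\<^sub>R v + (dE t * h) *\<^sub>R \<xi>)) (at t)"
      using pd[of t] has_field_derivative_imp_has_derivative[OF Ed[of t]]
      by (auto intro!: derivative_eq_intros)
    then show ?thesis unfolding q_def by (simp add: algebra_simps scaleR_add_right)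
  qed
  have gd: "(g has_real_derivative g' t) (at t)" for t
    unfolding g_def g'_def G1_def
    using comp_deriv[OF qd[of t]] Ed[of t] Epos[of t]
    by (auto intro!: derivative_eq_intros)
  have gb: "\<bar>g' t\<bar> \<le> ((A + K * R) * (1 + D * R) + (\<bar>c\<bar> / e0\<^sup>2 + B + A * R + K * R\<^sup>2) * D) * norm v" for t
  proof -
    define x where "x = p t"
    define Ex where "Ex = E t"
    have Ex: "Ex > 0" "Ex \<ge> e0" using Epos[of t] ege[of "p t"] unfolding Ex_def E_def by auto
    have R0: "R \<ge> 0" using xi norm_ge_zero order_trans by blast
    have A0: "A \<ge> 0"
    proof (rule ccontr)
      assume "\<not> A \<ge> 0"
      moreover have "e x > 0" using ege[of x] e0 by linarith
      ultimately have "A * e x < 0" by (simp add: mult_neg_pos)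
      then show False using A[of x] norm_ge_zero[of "grad x"] by linarith
    qed
    have D0: "D \<ge> 0" using D[of x] norm_ge_zero[of "de x"] by linarith
    have qx: "q t = x + Ex *\<^sub>R \<xi>" unfolding q_def x_def Ex_def by simp
    have nxi: "norm (Ex *\<^sub>R \<xi>) \<le> Ex * R" using Ex xi by (simp add: mult_left_mono)
    have h1: "norm (grad (q t)) \<le> (A + K * R) * Ex"
    proof -
      have "norm (grad (q t)) \<le> norm (grad x) + norm (grad (q t) - grad x)"
        by (metis add.commute diff_add_cancel norm_triangle_ineq)
      also have "\<dots> \<le> A * Ex + K * (Ex * R)"
        using A[of x] lipK[of "q t" x] nxi Kpos unfolding qx Ex_def E_def x_def
        by (smt (verit, best) add_diff_cancel_left' mult_left_mono)
      finally show ?thesis by (simp add: algebra_simps)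
    qed
    have h2: "\<bar>dE t\<bar> \<le> D * norm v"
      unfolding dE_def using D[of "p t"] Cauchy_Schwarz_ineq2[of "de (p t)" v]
      by (meson mult_right_mono norm_ge_zero order_trans)
    have h3: "norm (v + dE t *\<^sub>R \<xi>) \<le> (1 + D * R) * norm v"
    proof -
      have "norm (v + dE t *\<^sub>R \<xi>) \<le> norm v + \<bar>dE t\<bar> * norm \<xi>"
        by (metis norm_scaleR norm_triangle_ineq real_norm_def)
      also have "\<dots> \<le> norm v + (D * norm v) * R"
        using h2 xi by (intro add_left_mono mult_mono) auto
      finally show ?thesis by (simp add: algebra_simps)
    qed
    have h4: "\<bar>G1 t\<bar> \<le> ((A + K * R) * Ex) * ((1 + D * R) * norm v)"
      unfolding G1_def using Cauchy_Schwarz_ineq2[of "grad (q t)" "v + dE t *\<^sub>R \<xi>"] h1 h3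
      by (meson mult_mono norm_ge_zero order_trans)
    define C where "C = \<bar>c\<bar> / e0\<^sup>2 + B + A * R + K * R\<^sup>2"
    have h5: "\<bar>\<Gamma> (q t)\<bar> \<le> C * Ex\<^sup>2"
    proof -
      have t1: "\<bar>\<Gamma> (q t) - \<Gamma> x - grad x \<bullet> (Ex *\<^sub>R \<xi>)\<bar> \<le> K * (Ex * R)\<^sup>2"
        using taylor[of "q t" x] unfolding qx using nxi Kpos
        by (smt (verit, ccfv_SIG) add_diff_cancel_left' mult_left_mono norm_ge_zero power_mono)
      have t2: "\<bar>grad x \<bullet> (Ex *\<^sub>R \<xi>)\<bar> \<le> (A * Ex) * (Ex * R)"
        using Cauchy_Schwarz_ineq2[of "grad x" "Ex *\<^sub>R \<xi>"] A[of x] nxi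
        unfolding Ex_def E_def x_def
        by (meson mult_mono norm_ge_zero order_trans)
      have t3: "\<bar>\<Gamma> x - c\<bar> \<le> B * Ex\<^sup>2" using B[of x] unfolding Ex_def E_def x_def .
      have t4: "\<bar>c\<bar> \<le> \<bar>c\<bar> / e0\<^sup>2 * Ex\<^sup>2"
      proof -
        have "e0\<^sup>2 \<le> Ex\<^sup>2" using Ex e0 by (intro power_mono) auto
        then have "1 \<le> Ex\<^sup>2 / e0\<^sup>2" using e0 by simp
        then show ?thesis
          by (metis abs_ge_zero mult.commute mult_le_cancel_left1 times_divide_eq_left
              times_divide_eq_right order_less_le mult_1_right mult_left_mono)
      qed
      have "\<bar>\<Gamma> (q t)\<bar> \<le> \<bar>c\<bar> / e0\<^sup>2 * Ex\<^sup>2 + B * Ex\<^sup>2 + (A * Ex) * (Ex * R) + K * (Ex * R)\<^sup>2"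
        using t1 t2 t3 t4 by linarith
      also have "\<dots> = C * Ex\<^sup>2" unfolding C_def by (simp add: algebra_simps power2_eq_square)
      finally show ?thesis .
    qed
    have C0: "0 \<le> C * Ex\<^sup>2" using h5 abs_ge_zero[of "\<Gamma> (q t)"] by linarith
    have "\<bar>g' t\<bar> \<le> \<bar>G1 t\<bar> / Ex + \<bar>\<Gamma> (q t)\<bar> * \<bar>dE t\<bar> / Ex\<^sup>2"
    proof -
      have "g' t = G1 t / Ex - \<Gamma> (q t) * dE t / Ex\<^sup>2"
        unfolding g'_def Ex_def using Epos[of t] by (simp add: field_simps power2_eq_square)
      moreover have "\<bar>G1 t / Ex\<bar> = \<bar>G1 t\<bar> / Ex" using Ex by simp
      moreover have "\<bar>\<Gamma> (q t) * dE t / Ex\<^sup>2\<bar> = \<bar>\<Gamma> (q t)\<bar> * \<bar>dE t\<bar> / Ex\<^sup>2"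
        by (simp add: abs_mult)
      ultimately show ?thesis by (metis abs_triangle_ineq4)
    qed
    also have "\<dots> \<le> (A + K * R) * (1 + D * R) * norm v + (C * D) * norm v"
    proof -
      have "\<bar>G1 t\<bar> / Ex \<le> (A + K * R) * (1 + D * R) * norm v"
        using h4 Ex by (simp add: divide_le_eq mult_ac)
      moreover have "\<bar>\<Gamma> (q t)\<bar> * \<bar>dE t\<bar> \<le> (C * Ex\<^sup>2) * (D * norm v)"
        using h5 h2 C0 by (intro mult_mono) auto
      then have "\<bar>\<Gamma> (q t)\<bar> * \<bar>dE t\<bar> / Ex\<^sup>2 \<le> (C * D) * norm v"
        using Ex by (simp add: divide_le_eq mult_ac)
      ultimately show ?thesis by linarith
    qed
    finally show ?thesis unfolding C_def by (simp add: algebra_simps)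
  qed
  have "\<bar>g 1 - g 0\<bar> \<le> ((A + K * R) * (1 + D * R) + (\<bar>c\<bar> / e0\<^sup>2 + B + A * R + K * R\<^sup>2) * D) * norm v"
    by (rule mvt01[OF gd gb])
  moreover have "g 1 = Yn e \<Gamma> \<theta>' \<xi>" "g 0 = Yn e \<Gamma> \<theta> \<xi>"
    unfolding g_def q_def E_def p_def v_def Yn_def by auto
  ultimately show ?thesis unfolding v_def by simp
qed

end

lemma sqrt_comp_deriv:
  fixes f :: "'a::euclidean_space \<Rightarrow> real"
  assumes "(f has_derivative (\<lambda>h. df \<bullet> h)) (at x)" "f x > 0"
  shows "((\<lambda>x. c * sqrt (f x)) has_derivative (\<lambda>h. ((c / (2 * sqrt (f x))) *\<^sub>R df) \<bullet> h)) (at x)"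
proof -
  have "((\<lambda>x. sqrt (f x)) has_derivative (\<lambda>h. (inverse (sqrt (f x)) / 2) * (df \<bullet> h))) (at x)"
    using has_derivative_compose[OF assms(1) has_field_derivative_imp_has_derivative[OF DERIV_real_sqrt[OF assms(2)]]] .
  then have "((\<lambda>x. c * sqrt (f x)) has_derivative (\<lambda>h. c * ((inverse (sqrt (f x)) / 2) * (df \<bullet> h)))) (at x)"
    by (rule has_derivative_mult_right)
  then show ?thesis by (simp add: field_simps)
qed

lemma case1_deriv:
  fixes \<theta>c :: "'a::euclidean_space" and \<sigma> :: real
  assumes "\<sigma> > 0"
  shows "((\<lambda>\<theta>. c * sqrt (1 + (norm (\<theta> - \<theta>c))\<^sup>2 / \<sigma>\<^sup>2)) has_derivative
     (\<lambda>h. ((c / (2 * sqrt (1 + (norm (\<theta> - \<theta>c))\<^sup>2 / \<sigma>\<^sup>2))) *\<^sub>R ((2 / \<sigma>\<^sup>2) *\<^sub>R (\<theta> - \<theta>c))) \<bullet> h)) (at \<theta>)"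
proof -
  have "((\<lambda>\<theta>. 1 + (\<theta> - \<theta>c) \<bullet> (\<theta> - \<theta>c) / \<sigma>\<^sup>2) has_derivative (\<lambda>h. ((2 / \<sigma>\<^sup>2) *\<^sub>R (\<theta> - \<theta>c)) \<bullet> h)) (at \<theta>)"
    using assms by (auto intro!: derivative_eq_intros simp: fun_eq_iff inner_commute inner_diff_right power2_eq_square)
  then have "((\<lambda>\<theta>. 1 + (norm (\<theta> - \<theta>c))\<^sup>2 / \<sigma>\<^sup>2) has_derivative (\<lambda>h. ((2 / \<sigma>\<^sup>2) *\<^sub>R (\<theta> - \<theta>c)) \<bullet> h)) (at \<theta>)"
    by (simp add: power2_norm_eq_inner)
  from sqrt_comp_deriv[OF this] show ?thesis
    by (simp add: add_pos_nonneg)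
qed

theorem proposition3p1:
  fixes \<Gamma> :: "'a::euclidean_space \<Rightarrow> real"
    and grad :: "'a \<Rightarrow> 'a"
    and eps :: "'a \<Rightarrow> real"
    and \<epsilon> :: real
  assumes deriv: "\<And>\<theta>. (\<Gamma> has_derivative (\<lambda>h. grad \<theta> \<bullet> h)) (at \<theta>)"
    and lip: "\<exists>K. \<forall>x y. norm (grad x - grad y) \<le> K * norm (x - y)"
    and eps_pos: "\<epsilon> > 0"
    and cases:
      "(\<exists>\<theta>ctr \<sigma>p. \<sigma>p > 0 \<and>
          eps = (\<lambda>\<theta>. \<epsilon> * sqrt (1 + (norm (\<theta> - \<theta>ctr))\<^sup>2 / \<sigma>p\<^sup>2)))
       \<or> (\<exists>\<Gamma>m \<delta>. (\<forall>\<theta>. \<Gamma> \<theta> \<ge> \<Gamma>m) \<and> \<delta> > 0 \<and>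
          (\<forall>\<theta>. norm \<theta> \<ge> 1 / \<delta> \<longrightarrow> norm (grad \<theta>) \<ge> \<delta> * norm \<theta>) \<and>
          eps = (\<lambda>\<theta>. \<epsilon> * sqrt (1 + \<Gamma> \<theta> - \<Gamma>m)))"
  shows "\<forall>S::'a set. bounded S \<longrightarrow>
           (\<exists>L. \<forall>\<theta> \<theta>' \<xi>. \<xi> \<in> S \<longrightarrow>
              \<bar>Yn eps \<Gamma> \<theta>' \<xi> - Yn eps \<Gamma> \<theta> \<xi>\<bar> \<le> L * norm (\<theta>' - \<theta>))"
proof -
  obtain K0 where K0: "\<forall>x y. norm (grad x - grad y) \<le> K0 * norm (x - y)" using lip by blast
  define K where "K = max K0 1"
  have Kpos: "K > 0" unfolding K_def by simp
  have lipK: "norm (grad x - grad y) \<le> K * norm (x - y)" for x y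
  proof -
    have "K0 * norm (x - y) \<le> K * norm (x - y)" unfolding K_def by (intro mult_right_mono) auto
    then show ?thesis using K0 by (meson order_trans)
  qed
  interpret sm: smoothfn \<Gamma> grad K
    by unfold_locales (use deriv lipK Kpos in auto)
  show ?thesis
  proof (intro allI impI)
    fix S :: "'a set" assume "bounded S"
    then obtain R where R: "\<forall>\<xi>\<in>S. norm \<xi> \<le> R" by (auto simp: bounded_iff)
    from cases show "\<exists>L. \<forall>\<theta> \<theta>' \<xi>. \<xi> \<in> S \<longrightarrow>
              \<bar>Yn eps \<Gamma> \<theta>' \<xi> - Yn eps \<Gamma> \<theta> \<xi>\<bar> \<le> L * norm (\<theta>' - \<theta>)"
    proof
      assume "\<exists>\<theta>ctr \<sigma>p. \<sigma>p > 0 \<and>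
          eps = (\<lambda>\<theta>. \<epsilon> * sqrt (1 + (norm (\<theta> - \<theta>ctr))\<^sup>2 / \<sigma>p\<^sup>2))"
      then obtain \<theta>c \<sigma> where \<sigma>: "\<sigma> > 0"
        and epsd: "eps = (\<lambda>\<theta>. \<epsilon> * sqrt (1 + (norm (\<theta> - \<theta>c))\<^sup>2 / \<sigma>\<^sup>2))" by blast
      define sq where "sq \<theta> = sqrt (1 + (norm (\<theta> - \<theta>c))\<^sup>2 / \<sigma>\<^sup>2)" for \<theta>
      define de where "de \<theta> = (\<epsilon> / (2 * sq \<theta>)) *\<^sub>R ((2 / \<sigma>\<^sup>2) *\<^sub>R (\<theta> - \<theta>c))" for \<theta>
      define G where "G = norm (grad \<theta>c)"
      have epsq: "eps \<theta> = \<epsilon> * sq \<theta>" for \<theta> unfolding epsd sq_def by simp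
      have sq1: "sq \<theta> \<ge> 1" for \<theta> unfolding sq_def by simp
      have sqr: "norm (\<theta> - \<theta>c) \<le> \<sigma> * sq \<theta>" for \<theta>
      proof -
        have "(norm (\<theta> - \<theta>c) / \<sigma>)\<^sup>2 \<le> 1 + (norm (\<theta> - \<theta>c))\<^sup>2 / \<sigma>\<^sup>2"
          by (simp add: power_divide)
        then have "norm (\<theta> - \<theta>c) / \<sigma> \<le> sq \<theta>" unfolding sq_def
          using real_le_rsqrt by blast
        then show ?thesis using \<sigma> by (simp add: divide_le_eq mult.commute)
      qed
      have e0: "eps \<theta> \<ge> \<epsilon>" for \<theta> unfolding epsq using sq1[of \<theta>] eps_pos by simp
      have ed: "(eps has_derivative (\<lambda>h. de \<theta> \<bullet> h)) (at \<theta>)" for \<theta>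
        unfolding epsd de_def sq_def using case1_deriv[OF \<sigma>] .
      have D: "norm (de \<theta>) \<le> \<epsilon> / \<sigma>" for \<theta>
      proof -
        have "norm (de \<theta>) = \<epsilon> / (sq \<theta> * \<sigma>\<^sup>2) * norm (\<theta> - \<theta>c)"
          unfolding de_def using eps_pos sq1[of \<theta>] \<sigma> by simp
        also have "\<dots> \<le> \<epsilon> / (sq \<theta> * \<sigma>\<^sup>2) * (\<sigma> * sq \<theta>)"
          using sqr[of \<theta>] eps_pos sq1[of \<theta>] \<sigma> by (intro mult_left_mono) auto
        also have "\<dots> = \<epsilon> / \<sigma>" using sq1[of \<theta>] \<sigma> by (simp add: power2_eq_square)
        finally show ?thesis .
      qed
      have A: "norm (grad \<theta>) \<le> ((G + K * \<sigma>) / \<epsilon>) * eps \<theta>" for \<theta>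
      proof -
        have "norm (grad \<theta>) \<le> G + norm (grad \<theta> - grad \<theta>c)"
          unfolding G_def by (metis add.commute diff_add_cancel norm_triangle_ineq)
        also have "\<dots> \<le> G * sq \<theta> + K * (\<sigma> * sq \<theta>)"
          using lipK[of \<theta> \<theta>c] sqr[of \<theta>] Kpos sq1[of \<theta>] mult_left_mono[of 1 "sq \<theta>" G]
          unfolding G_def
          by (smt (verit, ccfv_SIG) mult_left_mono norm_ge_zero)
        also have "\<dots> = ((G + K * \<sigma>) / \<epsilon>) * eps \<theta>" unfolding epsq using eps_pos
          by (simp add: field_simps)
        finally show ?thesis .
      qed
      have B: "\<bar>\<Gamma> \<theta> - \<Gamma> \<theta>c\<bar> \<le> ((G * \<sigma> + K * \<sigma>\<^sup>2) / \<epsilon>\<^sup>2) * (eps \<theta>)\<^sup>2" for \<theta>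
      proof -
        have "\<bar>\<Gamma> \<theta> - \<Gamma> \<theta>c\<bar> \<le> \<bar>grad \<theta>c \<bullet> (\<theta> - \<theta>c)\<bar> + K * (norm (\<theta> - \<theta>c))\<^sup>2"
          using sm.taylor[of \<theta> \<theta>c] by linarith
        also have "\<dots> \<le> G * (\<sigma> * sq \<theta>) + K * (\<sigma> * sq \<theta>)\<^sup>2"
        proof (intro add_mono mult_left_mono)
          show "\<bar>grad \<theta>c \<bullet> (\<theta> - \<theta>c)\<bar> \<le> G * (\<sigma> * sq \<theta>)"
            unfolding G_def using Cauchy_Schwarz_ineq2[of "grad \<theta>c" "\<theta> - \<theta>c"] sqr[of \<theta>]
            by (meson mult_left_mono norm_ge_zero order_trans)
          show "(norm (\<theta> - \<theta>c))\<^sup>2 \<le> (\<sigma> * sq \<theta>)\<^sup>2" using sqr[of \<theta>] by (intro power_mono) auto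
        qed (use Kpos in auto)
        also have "\<dots> \<le> G * (\<sigma> * (sq \<theta>)\<^sup>2) + K * (\<sigma> * sq \<theta>)\<^sup>2"
        proof -
          have "sq \<theta> \<le> (sq \<theta>)\<^sup>2" using sq1[of \<theta>] by (simp add: power2_eq_square)
          then show ?thesis using \<sigma> Kpos unfolding G_def by (intro add_mono mult_left_mono) auto
        qed
        also have "\<dots> = ((G * \<sigma> + K * \<sigma>\<^sup>2) / \<epsilon>\<^sup>2) * (eps \<theta>)\<^sup>2" unfolding epsq using eps_pos
          by (simp add: field_simps power2_eq_square)
        finally show ?thesis .
      qed
      show ?thesis
      proof (intro exI allI impI)
        fix \<theta> \<theta>' \<xi> assume "\<xi> \<in> S"
        then have "norm \<xi> \<le> R" using R by blast
        from sm.generic[OF eps_pos e0 ed D A B this]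
        show "\<bar>Yn eps \<Gamma> \<theta>' \<xi> - Yn eps \<Gamma> \<theta> \<xi>\<bar> \<le> ((((G + K * \<sigma>) / \<epsilon>) + K * R) * (1 + (\<epsilon> / \<sigma>) * R) + (\<bar>\<Gamma> \<theta>c\<bar> / \<epsilon>\<^sup>2 + ((G * \<sigma> + K * \<sigma>\<^sup>2) / \<epsilon>\<^sup>2) + ((G + K * \<sigma>) / \<epsilon>) * R + K * R\<^sup>2) * (\<epsilon> / \<sigma>)) * norm (\<theta>' - \<theta>)" .
      qed
    next
      assume "\<exists>\<Gamma>m \<delta>. (\<forall>\<theta>. \<Gamma> \<theta> \<ge> \<Gamma>m) \<and> \<delta> > 0 \<and>
          (\<forall>\<theta>. norm \<theta> \<ge> 1 / \<delta> \<longrightarrow> norm (grad \<theta>) \<ge> \<delta> * norm \<theta>) \<and>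
          eps = (\<lambda>\<theta>. \<epsilon> * sqrt (1 + \<Gamma> \<theta> - \<Gamma>m))"
      then obtain \<Gamma>m where lb: "\<And>\<theta>. \<Gamma> \<theta> \<ge> \<Gamma>m"
        and epsd: "eps = (\<lambda>\<theta>. \<epsilon> * sqrt (1 + \<Gamma> \<theta> - \<Gamma>m))" by blast
      define sq where "sq \<theta> = sqrt (1 + \<Gamma> \<theta> - \<Gamma>m)" for \<theta>
      define de where "de \<theta> = (\<epsilon> / (2 * sq \<theta>)) *\<^sub>R grad \<theta>" for \<theta>
      have epsq: "eps \<theta> = \<epsilon> * sq \<theta>" for \<theta> unfolding epsd sq_def by simp
      have sq1: "sq \<theta> \<ge> 1" for \<theta> unfolding sq_def using lb[of \<theta>] by simp
      have sq2: "(sq \<theta>)\<^sup>2 = 1 + \<Gamma> \<theta> - \<Gamma>m" for \<theta> unfolding sq_def using lb[of \<theta>] by simp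
      have e0: "eps \<theta> \<ge> \<epsilon>" for \<theta> unfolding epsq using sq1[of \<theta>] eps_pos by simp
      have ed: "(eps has_derivative (\<lambda>h. de \<theta> \<bullet> h)) (at \<theta>)" for \<theta>
      proof -
        have "((\<lambda>\<theta>. 1 + \<Gamma> \<theta> - \<Gamma>m) has_derivative (\<lambda>h. grad \<theta> \<bullet> h)) (at \<theta>)"
          using deriv[of \<theta>] by (auto intro!: derivative_eq_intros)
        from sqrt_comp_deriv[OF this, of \<epsilon>] show ?thesis
          unfolding epsd de_def sq_def using lb[of \<theta>] by simp
      qed
      have gb: "norm (grad \<theta>) \<le> 2 * sqrt K * sq \<theta>" for \<theta>
      proof -
        have "(norm (grad \<theta>))\<^sup>2 \<le> 4 * K * (\<Gamma> \<theta> - \<Gamma>m)" using sm.descent[OF lb] .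
        also have "\<dots> \<le> 4 * K * (sq \<theta>)\<^sup>2" using sq2[of \<theta>] Kpos by simp
        also have "\<dots> = (2 * sqrt K * sq \<theta>)\<^sup>2" using Kpos by (simp add: power_mult_distrib)
        finally have "(norm (grad \<theta>))\<^sup>2 \<le> (2 * sqrt K * sq \<theta>)\<^sup>2" .
        moreover have "0 \<le> 2 * sqrt K * sq \<theta>" using sq1[of \<theta>] Kpos by simp
        ultimately show ?thesis by (rule power2_le_imp_le)
      qed
      have D: "norm (de \<theta>) \<le> \<epsilon> * sqrt K" for \<theta>
      proof -
        have "norm (de \<theta>) = \<epsilon> / (2 * sq \<theta>) * norm (grad \<theta>)"
          unfolding de_def using eps_pos sq1[of \<theta>] by simp
        also have "\<dots> \<le> \<epsilon> / (2 * sq \<theta>) * (2 * sqrt K * sq \<theta>)"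
          using gb[of \<theta>] eps_pos sq1[of \<theta>] by (intro mult_left_mono) auto
        also have "\<dots> = \<epsilon> * sqrt K" using sq1[of \<theta>] by simp
        finally show ?thesis .
      qed
      have A: "norm (grad \<theta>) \<le> (2 * sqrt K / \<epsilon>) * eps \<theta>" for \<theta>
        using gb[of \<theta>] eps_pos unfolding epsq by simp
      have B: "\<bar>\<Gamma> \<theta> - \<Gamma>m\<bar> \<le> (1 / \<epsilon>\<^sup>2) * (eps \<theta>)\<^sup>2" for \<theta>
        using lb[of \<theta>] sq2[of \<theta>] eps_pos unfolding epsq by (simp add: power_mult_distrib)
      show ?thesis
      proof (intro exI allI impI)
        fix \<theta> \<theta>' \<xi> assume "\<xi> \<in> S"
        then have "norm \<xi> \<le> R" using R by blast
        from sm.generic[OF eps_pos e0 ed D A B this]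
        show "\<bar>Yn eps \<Gamma> \<theta>' \<xi> - Yn eps \<Gamma> \<theta> \<xi>\<bar> \<le> (((2 * sqrt K / \<epsilon>) + K * R) * (1 + (\<epsilon> * sqrt K) * R) + (\<bar>\<Gamma>m\<bar> / \<epsilon>\<^sup>2 + (1 / \<epsilon>\<^sup>2) + (2 * sqrt K / \<epsilon>) * R + K * R\<^sup>2) * (\<epsilon> * sqrt K)) * norm (\<theta>' - \<theta>)" .
      qed
    qed
  qed
qed

end
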